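(* For every $k\in\mathbb N_{>0}$, there exists a $2$-cell $\mathrm{tel}_k$ of the free weak $\omega$-category generated by the computad $\mathrm{Tel}_k$ whose source is the unbiased composite $f_1\ast_0 f_2\ast_0\cdots\ast_0 f_k\ast_0 g_k\ast_0\cdots\ast_0 g_1$ of the $2k$ consecutive $1$-cells $f_1,\dots,f_k,g_k,\dots,g_1$ (formally, the image of the unbiased composition cell over the chain of $2k$ consecutive $1$-cells under the morphism sending the $i$-th $1$-position to $f_i$ for $i\le k$ and to $g_{2k-i+1}$ for $k<i\le 2k$), and whose target is the identity $\mathrm{id}(x_0)$.
   Context: Computads (Dean et al.) are generating data for weak $\omega$-categories: a set of generators in each dimension, each $n$-generator attached to a pair of parallel $(n-1)$-cells of the free weak $\omega$-category on the lower-dimensional generators. $\mathrm{Tel}_k$ is the $2$-computad with $0$-generators $x_0,\dots,x_k$, $1$-generators $f_i\colon x_{i-1}\to x_i$ and $g_i\colon x_i\to x_{i-1}$ for $1\le i\le k$, $2$-generators $\alpha_i\colon f_i\ast_0 g_i\to\mathrm{id}(x_{i-1})$ for $1\le i\le k$, and no higher generators; here $\ast_0$ is the canonical binary composition of $1$-cells and $\mathrm{id}$ the canonical identity. The unbiased composite of a chain of consecutive $1$-cells is the canonical composition operation over the Batanin tree of the chain (a pasting diagram $\bullet\to\bullet\to\cdots\to\bullet$). *)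

theory Defs
  imports Main
begin

datatype tree = Br "tree list"

inductive is_pos :: "tree \<Rightarrow> nat list \<Rightarrow> bool" where
  pos0: "j \<le> length Bs \<Longrightarrow> is_pos (Br Bs) [j]"
| posS: "1 \<le> i \<Longrightarrow> i \<le> length Bs \<Longrightarrow> is_pos (Bs ! (i - 1)) p \<Longrightarrow> is_pos (Br Bs) (i # p)"

text \<open>Boundary trees: positions of the n-dimensional source (e = False) / target (e = True)
boundary of a tree, viewed inside the tree.\<close>

inductive in_bdry :: "tree \<Rightarrow> nat \<Rightarrow> bool \<Rightarrow> nat list \<Rightarrow> bool" where
  bd0s: "in_bdry (Br Bs) 0 False [0]"
| bd0t: "in_bdry (Br Bs) 0 True [length Bs]"
| bdS0: "j \<le> length Bs \<Longrightarrow> in_bdry (Br Bs) (Suc n) e [j]"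
| bdSS: "1 \<le> i \<Longrightarrow> i \<le> length Bs \<Longrightarrow> in_bdry (Bs ! (i - 1)) n e p
          \<Longrightarrow> in_bdry (Br Bs) (Suc n) e (i # p)"

fun tree_dim :: "tree \<Rightarrow> nat" where
  "tree_dim (Br Bs) = (if Bs = [] then 0 else Suc (fold max (map tree_dim Bs) 0))"

text \<open>A coherence Coh B A \<sigma> is the
coherence cell over tree B with (full) type A, written in the variables = positions of B,
composed with the substitution (computad morphism) \<sigma> from positions of B.\<close>

datatype tm = V "nat list" | Coh tree ty "nat list \<Rightarrow> tm"
     and ty = Star | Arr ty tm tm

primrec subst_tm :: "(nat list \<Rightarrow> tm) \<Rightarrow> tm \<Rightarrow> tm"
  and subst_ty :: "(nat list \<Rightarrow> tm) \<Rightarrow> ty \<Rightarrow> ty" where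
  "subst_tm \<sigma> (V x) = \<sigma> x"
| "subst_tm \<sigma> (Coh B A \<tau>) = Coh B A (\<lambda>p. subst_tm \<sigma> (\<tau> p))"
| "subst_ty \<sigma> Star = Star"
| "subst_ty \<sigma> (Arr A s t) = Arr (subst_ty \<sigma> A) (subst_tm \<sigma> s) (subst_tm \<sigma> t)"

primrec fv_tm :: "tm \<Rightarrow> nat list set"
  and fv_ty :: "ty \<Rightarrow> nat list set" where
  "fv_tm (V x) = {x}"
| "fv_tm (Coh B A \<tau>) = (\<Union>p\<in>{p. is_pos B p}. fv_tm (\<tau> p))"
| "fv_ty Star = {}"
| "fv_ty (Arr A s t) = fv_ty A \<union> fv_tm s \<union> fv_tm t"

primrec tdim :: "ty \<Rightarrow> nat" where
  "tdim Star = 0"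
| "tdim (Arr A s t) = Suc (tdim A)"

text \<open>Type of a position: suspension of the type of the position in the child tree.\<close>

primrec susp_ty :: "nat \<Rightarrow> ty \<Rightarrow> ty" where
  "susp_ty i Star = Arr Star (V [i - 1]) (V [i])"
| "susp_ty i (Arr A s t) = Arr (susp_ty i A) (subst_tm (\<lambda>x. V (i # x)) s) (subst_tm (\<lambda>x. V (i # x)) t)"

fun ptype :: "nat list \<Rightarrow> ty" where
  "ptype [] = Star"
| "ptype [j] = Star"
| "ptype (i # j # r) = susp_ty i (ptype (j # r))"

definition bctx :: "tree \<Rightarrow> nat \<Rightarrow> bool \<Rightarrow> nat list \<Rightarrow> ty option" where
  "bctx B n e = (\<lambda>q. if in_bdry B n e q then Some (ptype q) else None)"

definition bset :: "tree \<Rightarrow> nat \<Rightarrow> bool \<Rightarrow> nat list set" where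
  "bset B n e = {q. in_bdry B n e q}"

text \<open>Typing relative to a computad given as a partial map from generator names to their
types (boundary spheres). The coherence rule requires the sphere (s,t) of dimension n to be
full: dim B \<le> n+1, s a term of the source boundary with support (together with its type) all of
the source boundary, and likewise t for the target boundary.\<close>

inductive ty_ok :: "(nat list \<Rightarrow> ty option) \<Rightarrow> ty \<Rightarrow> bool"
  and tm_of :: "(nat list \<Rightarrow> ty option) \<Rightarrow> tm \<Rightarrow> ty \<Rightarrow> bool" where
  ty_star: "ty_ok \<Gamma> Star"
| ty_arr: "ty_ok \<Gamma> A \<Longrightarrow> tm_of \<Gamma> s A \<Longrightarrow> tm_of \<Gamma> t A \<Longrightarrow> ty_ok \<Gamma> (Arr A s t)"
| tm_var: "\<Gamma> x = Some A \<Longrightarrow> ty_ok \<Gamma> A \<Longrightarrow> tm_of \<Gamma> (V x) A"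
| tm_coh: "tree_dim B \<le> Suc (tdim A) \<Longrightarrow>
    tm_of (bctx B (tdim A) False) s A \<Longrightarrow> fv_tm s \<union> fv_ty A = bset B (tdim A) False \<Longrightarrow>
    tm_of (bctx B (tdim A) True) t A \<Longrightarrow> fv_tm t \<union> fv_ty A = bset B (tdim A) True \<Longrightarrow>
    (\<forall>p. is_pos B p \<longrightarrow> tm_of \<Gamma> (\<sigma> p) (subst_ty \<sigma> (ptype p))) \<Longrightarrow>
    tm_of \<Gamma> (Coh B (Arr A s t) \<sigma>) (subst_ty \<sigma> (Arr A s t))"

text \<open>Unbiased composite of a chain of n consecutive 1-cells ar 1, ..., ar n with
vertices ob 0, ..., ob n: the canonical coherence over the tree of the chain.\<close>

definition chain :: "nat \<Rightarrow> tree" where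
  "chain n = Br (replicate n (Br []))"

definition ucomp :: "nat \<Rightarrow> (nat \<Rightarrow> tm) \<Rightarrow> (nat \<Rightarrow> tm) \<Rightarrow> tm" where
  "ucomp n ob ar = Coh (chain n) (Arr Star (V [0]) (V [n]))
     (\<lambda>q. case q of [j] \<Rightarrow> ob j | [i, 0] \<Rightarrow> ar i | _ \<Rightarrow> V [])"

definition comp0 :: "tm \<Rightarrow> tm \<Rightarrow> tm \<Rightarrow> tm \<Rightarrow> tm \<Rightarrow> tm" where
  "comp0 x y z a b = ucomp 2 (\<lambda>j. if j = 0 then x else if j = 1 then y else z)
                              (\<lambda>i. if i = 1 then a else b)"

definition idc :: "tm \<Rightarrow> tm" where
  "idc x = Coh (Br []) (Arr Star (V [0]) (V [0])) (\<lambda>_. x)"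

definition xg :: "nat \<Rightarrow> nat list" where "xg i = [0, i]"
definition fg :: "nat \<Rightarrow> nat list" where "fg i = [1, i]"
definition gg :: "nat \<Rightarrow> nat list" where "gg i = [2, i]"
definition ag :: "nat \<Rightarrow> nat list" where "ag i = [3, i]"

definition tel_ctx :: "nat \<Rightarrow> nat list \<Rightarrow> ty option" where
  "tel_ctx k q = (if length q = 2 then
     (let c = q ! 0; i = q ! 1 in
      if c = 0 \<and> i \<le> k then Some Star
      else if c = 1 \<and> 1 \<le> i \<and> i \<le> k then Some (Arr Star (V (xg (i - 1))) (V (xg i)))
      else if c = 2 \<and> 1 \<le> i \<and> i \<le> k then Some (Arr Star (V (xg i)) (V (xg (i - 1))))
      else if c = 3 \<and> 1 \<le> i \<and> i \<le> k then
        Some (Arr (Arr Star (V (xg (i - 1))) (V (xg (i - 1))))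
                  (comp0 (V (xg (i - 1))) (V (xg i)) (V (xg (i - 1))) (V (fg i)) (V (gg i)))
                  (idc (V (xg (i - 1)))))
      else None)
   else None)"

end

theory Submission imports Defs begin

lemma is_pos_Br: "is_pos (Br Bs) p \<longleftrightarrow> (\<exists>j. p = [j] \<and> j \<le> length Bs) \<or>
   (\<exists>i q. p = i # q \<and> 1 \<le> i \<and> i \<le> length Bs \<and> is_pos (Bs ! (i - 1)) q)"
  by (auto elim: is_pos.cases intro: is_pos.intros)

lemma bex_Suc: "(\<exists>i\<in>{1..Suc n}. P i) \<longleftrightarrow> (\<exists>i\<in>{1..n}. P i) \<or> P (Suc n)"
  apply (auto simp: le_Suc_eq)
  by (rule bexI[of _ "Suc n"]) auto
lemma bex_0: "(\<exists>i\<in>{1..0::nat}. P i) \<longleftrightarrow> False" by auto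

lemma is_pos_Br': "is_pos (Br Bs) p \<longleftrightarrow> (\<exists>j. p = [j] \<and> j \<le> length Bs) \<or>
   (\<exists>i\<in>{1..length Bs}. \<exists>q. p = i # q \<and> is_pos (Bs ! (i - 1)) q)"
  unfolding is_pos_Br by auto

lemma in_bdry_S': "in_bdry (Br Bs) (Suc n) e q \<longleftrightarrow> (\<exists>j. q = [j] \<and> j \<le> length Bs) \<or>
   (\<exists>i\<in>{1..length Bs}. \<exists>p. q = i # p \<and> in_bdry (Bs ! (i - 1)) n e p)"
  by (auto elim: in_bdry.cases intro: in_bdry.intros)

lemma is_pos_nil: "is_pos (Br []) p \<longleftrightarrow> p = [0]"
  by (auto simp: is_pos_Br)

lemma in_bdry_0: "in_bdry (Br Bs) 0 e q \<longleftrightarrow> q = (if e then [length Bs] else [0])"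
  by (auto elim: in_bdry.cases intro: in_bdry.intros)

lemma in_bdry_S: "in_bdry (Br Bs) (Suc n) e q \<longleftrightarrow> (\<exists>j. q = [j] \<and> j \<le> length Bs) \<or>
   (\<exists>i p. q = i # p \<and> 1 \<le> i \<and> i \<le> length Bs \<and> in_bdry (Bs ! (i - 1)) n e p)"
  by (auto elim: in_bdry.cases intro: in_bdry.intros)

lemma is_pos_Br2: "is_pos (Br Bs) p \<longleftrightarrow> (\<exists>j<Suc (length Bs). p = [j]) \<or>
   (\<exists>i<length Bs. \<exists>q. p = Suc i # q \<and> is_pos (Bs ! i) q)"
  unfolding is_pos_Br
  by (auto simp: less_Suc_eq_le)

lemma in_bdry_S2: "in_bdry (Br Bs) (Suc n) e q \<longleftrightarrow> (\<exists>j<Suc (length Bs). q = [j]) \<or>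
   (\<exists>i<length Bs. \<exists>p. q = Suc i # p \<and> in_bdry (Bs ! i) n e p)"
  unfolding in_bdry_S
  by (auto simp: less_Suc_eq_le)

lemma coh_rule:
  assumes "tree_dim B \<le> Suc (tdim A)"
    "tm_of (bctx B (tdim A) False) s A" "fv_tm s \<union> fv_ty A = bset B (tdim A) False"
    "tm_of (bctx B (tdim A) True) t A" "fv_tm t \<union> fv_ty A = bset B (tdim A) True"
    "\<And>p. is_pos B p \<Longrightarrow> tm_of \<Gamma> (\<sigma> p) (subst_ty \<sigma> (ptype p))"
    "T = subst_ty \<sigma> (Arr A s t)"
  shows "tm_of \<Gamma> (Coh B (Arr A s t) \<sigma>) T"
  unfolding assms(7) by (rule ty_ok_tm_of.intros(4)) (use assms in auto)

lemma var_rule: "\<Gamma> x = Some A \<Longrightarrow> ty_ok \<Gamma> A \<Longrightarrow> tm_of \<Gamma> (V x) A"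
  by (rule ty_ok_tm_of.intros(3))

lemma arr_rule: "ty_ok \<Gamma> A \<Longrightarrow> tm_of \<Gamma> s A \<Longrightarrow> tm_of \<Gamma> t A \<Longrightarrow> ty_ok \<Gamma> (Arr A s t)"
  by (rule ty_ok_tm_of.intros(2))

lemma star_rule: "ty_ok \<Gamma> Star" by (rule ty_ok_tm_of.intros(1))

lemma tree_dim_chain: "tree_dim (chain n) \<le> 1"
proof -
  have "fold max (replicate n (0::nat)) 0 = 0" by (induction n) auto
  then show ?thesis by (simp add: chain_def map_replicate_const)
qed

lemma is_pos_chain: "is_pos (chain n) p \<longleftrightarrow> (\<exists>j. p = [j] \<and> j \<le> n) \<or> (\<exists>i. p = [i, 0] \<and> 1 \<le> i \<and> i \<le> n)"
  by (auto simp: chain_def is_pos_Br is_pos_nil)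

lemma in_bdry_chain1: "in_bdry (chain n) (Suc 0) e p \<longleftrightarrow> is_pos (chain n) p"
  by (auto simp: chain_def is_pos_Br is_pos_nil in_bdry_S in_bdry_0 split: if_splits)

lemma ucomp_typ:
  assumes "\<And>j. j \<le> n \<Longrightarrow> tm_of \<Gamma> (ob j) Star"
    "\<And>i. 1 \<le> i \<Longrightarrow> i \<le> n \<Longrightarrow> tm_of \<Gamma> (ar i) (Arr Star (ob (i - 1)) (ob i))"
  shows "tm_of \<Gamma> (ucomp n ob ar) (Arr Star (ob 0) (ob n))"
  unfolding ucomp_def
proof (rule coh_rule)
  show "tree_dim (chain n) \<le> Suc (tdim Star)" using tree_dim_chain[of n] by simp
  show "tm_of (bctx (chain n) (tdim Star) False) (V [0]) Star"
    by (rule var_rule) (auto simp: bctx_def in_bdry_0 chain_def intro: star_rule)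
  show "tm_of (bctx (chain n) (tdim Star) True) (V [n]) Star"
    by (rule var_rule) (auto simp: bctx_def in_bdry_0 chain_def intro: star_rule)
  show "fv_tm (V [0]) \<union> fv_ty Star = bset (chain n) (tdim Star) False"
    by (auto simp: bset_def in_bdry_0 chain_def)
  show "fv_tm (V [n]) \<union> fv_ty Star = bset (chain n) (tdim Star) True"
    by (auto simp: bset_def in_bdry_0 chain_def)
  fix p assume "is_pos (chain n) p"
  then show "tm_of \<Gamma> ((\<lambda>q. case q of [j] \<Rightarrow> ob j | [i, 0] \<Rightarrow> ar i | _ \<Rightarrow> V []) p)
     (subst_ty (\<lambda>q. case q of [j] \<Rightarrow> ob j | [i, 0] \<Rightarrow> ar i | _ \<Rightarrow> V []) (ptype p))"
    using assms by (auto simp: is_pos_chain)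
qed simp

lemma idc_typ: "tm_of \<Gamma> x Star \<Longrightarrow> tm_of \<Gamma> (idc x) (Arr Star x x)"
  unfolding idc_def
  by (rule coh_rule) (auto simp: bctx_def bset_def in_bdry_0 is_pos_nil intro!: var_rule star_rule)

lemma subst_ucomp: "\<sigma> [] = V [] \<Longrightarrow>
  subst_tm \<sigma> (ucomp n ob ar) = ucomp n (\<lambda>j. subst_tm \<sigma> (ob j)) (\<lambda>i. subst_tm \<sigma> (ar i))"
  unfolding ucomp_def by (auto intro!: ext split: list.split nat.split)

lemma pos_chain_set: "{p. is_pos (chain n) p} = (\<lambda>j. [j]) ` {..n} \<union> (\<lambda>i. [i, 0]) ` {1..n}"
  by (auto simp: is_pos_chain)

lemma fv_ucomp: "fv_tm (ucomp n ob ar) = (\<Union>j\<in>{..n}. fv_tm (ob j)) \<union> (\<Union>i\<in>{1..n}. fv_tm (ar i))"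
  unfolding ucomp_def by (simp add: pos_chain_set)

lemma subst_idc: "subst_tm \<sigma> (idc x) = idc (subst_tm \<sigma> x)"
  unfolding idc_def by simp

lemma fv_idc: "fv_tm (idc x) = fv_tm x"
  unfolding idc_def by (simp add: is_pos_nil)

definition c3 :: "tm \<Rightarrow> tm \<Rightarrow> tm \<Rightarrow> tm \<Rightarrow> tm \<Rightarrow> tm \<Rightarrow> tm \<Rightarrow> tm" where
  "c3 a b c d f g h = ucomp 3 (\<lambda>j. if j = 0 then a else if j = 1 then b else if j = 2 then c else d)
     (\<lambda>i. if i = 1 then f else if i = 2 then g else h)"

lemma subst_c3: "\<sigma> [] = V [] \<Longrightarrow> subst_tm \<sigma> (c3 a b c d f g h) =
   c3 (subst_tm \<sigma> a) (subst_tm \<sigma> b) (subst_tm \<sigma> c) (subst_tm \<sigma> d) (subst_tm \<sigma> f) (subst_tm \<sigma> g) (subst_tm \<sigma> h)"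
  unfolding c3_def
  apply (subst subst_ucomp, assumption)
  apply (intro arg_cong2[where f="ucomp 3"] ext)
  by auto

lemma subst_comp0: "\<sigma> [] = V [] \<Longrightarrow> subst_tm \<sigma> (comp0 a b c f g) =
   comp0 (subst_tm \<sigma> a) (subst_tm \<sigma> b) (subst_tm \<sigma> c) (subst_tm \<sigma> f) (subst_tm \<sigma> g)"
  unfolding comp0_def
  apply (subst subst_ucomp, assumption)
  apply (intro arg_cong2[where f="ucomp 2"] ext)
  by auto

lemma atMost3: "{..3::nat} = {0,1,2,3}" by auto
lemma atMost2: "{..2::nat} = {0,1,2}" by auto
lemma oneto3: "{1..3::nat} = {1,2,3}" by auto
lemma oneto2: "{1..2::nat} = {1,2}" by auto

lemma fv_c3: "fv_tm (c3 a b c d f g h) = fv_tm a \<union> fv_tm b \<union> fv_tm c \<union> fv_tm d \<union> fv_tm f \<union> fv_tm g \<union> fv_tm h"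
  unfolding c3_def fv_ucomp atMost3 oneto3 by auto

lemma fv_comp0: "fv_tm (comp0 a b c f g) = fv_tm a \<union> fv_tm b \<union> fv_tm c \<union> fv_tm f \<union> fv_tm g"
  unfolding comp0_def fv_ucomp atMost2 oneto2 by auto

lemma c3_typ:
  assumes "tm_of \<Gamma> a Star" "tm_of \<Gamma> b Star" "tm_of \<Gamma> c Star" "tm_of \<Gamma> d Star"
    "tm_of \<Gamma> f (Arr Star a b)" "tm_of \<Gamma> g (Arr Star b c)" "tm_of \<Gamma> h (Arr Star c d)"
  shows "tm_of \<Gamma> (c3 a b c d f g h) (Arr Star a d)"
proof -
  have "tm_of \<Gamma> (ucomp 3 (\<lambda>j. if j = 0 then a else if j = 1 then b else if j = 2 then c else d) (\<lambda>i. if i = 1 then f else if i = 2 then g else h)) (Arr Star ((\<lambda>j. if j = 0 then a else if j = 1 then b else if j = 2 then c else d) (0::nat))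
     ((\<lambda>j. if j = 0 then a else if j = 1 then b else if j = 2 then c else d) (3::nat)))"
  proof (rule ucomp_typ)
    fix i :: nat assume "1 \<le> i" "i \<le> 3"
    then have "i = 1 \<or> i = 2 \<or> i = 3" by auto
    then show "tm_of \<Gamma> (if i = 1 then f else if i = 2 then g else h)
         (Arr Star (if i - 1 = 0 then a else if i - 1 = 1 then b else if i - 1 = 2 then c else d)
           (if i = 0 then a else if i = 1 then b else if i = 2 then c else d))"
      using assms by auto
  qed (use assms in auto)
  then show ?thesis by (simp add: c3_def comp0_def)
qed

lemma comp0_typ:
  assumes "tm_of \<Gamma> a Star" "tm_of \<Gamma> b Star" "tm_of \<Gamma> c Star"
    "tm_of \<Gamma> f (Arr Star a b)" "tm_of \<Gamma> g (Arr Star b c)"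
  shows "tm_of \<Gamma> (comp0 a b c f g) (Arr Star a c)"
proof -
  have "tm_of \<Gamma> (ucomp 2 (\<lambda>j. if j = 0 then a else if j = 1 then b else c) (\<lambda>i. if i = 1 then f else g)) (Arr Star ((\<lambda>j. if j = 0 then a else if j = 1 then b else c) (0::nat))
     ((\<lambda>j. if j = 0 then a else if j = 1 then b else c) (2::nat)))"
  proof (rule ucomp_typ)
    fix i :: nat assume "1 \<le> i" "i \<le> 2"
    then have "i = 1 \<or> i = 2" by auto
    then show "tm_of \<Gamma> (if i = 1 then f else g)
         (Arr Star (if i - 1 = 0 then a else if i - 1 = 1 then b else c)
           (if i = 0 then a else if i = 1 then b else c))"
      using assms by auto
  qed (use assms in auto)
  then show ?thesis by (simp add: c3_def comp0_def)
qed

definition V2t :: tree where "V2t = Br [Br [Br [], Br []]]"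

definition vcomp :: "tm \<Rightarrow> tm \<Rightarrow> tm \<Rightarrow> tm \<Rightarrow> tm \<Rightarrow> tm \<Rightarrow> tm \<Rightarrow> tm" where
  "vcomp x y a b c th ph = Coh V2t (Arr (Arr Star (V [0]) (V [1])) (V [1, 0]) (V [1, 2]))
    (\<lambda>q. if q = [0] then x else if q = [1] then y else if q = [1, 0] then a else if q = [1, 1] then b
      else if q = [1, 2] then c else if q = [1, 1, 0] then th else if q = [1, 2, 0] then ph else V [])"

lemma one_le_one: "(Suc 0 \<le> i \<and> i \<le> Suc 0) \<longleftrightarrow> i = 1" by auto
lemma one_le_two: "(Suc 0 \<le> i \<and> i \<le> 2) \<longleftrightarrow> i = 1 \<or> i = 2" by auto
lemma one_le_three: "(Suc 0 \<le> i \<and> i \<le> 3) \<longleftrightarrow> i = 1 \<or> i = 2 \<or> i = 3" by auto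

lemma is_pos_V2t: "is_pos V2t p \<longleftrightarrow> p \<in> {[0], [1], [1, 0], [1, 1], [1, 2], [1, 1, 0], [1, 2, 0]}"
  unfolding V2t_def by (simp add: is_pos_Br2 Ex_less_Suc2 is_pos_nil) (auto simp: numeral_2_eq_2)

lemma bdry_V2t: "in_bdry V2t (Suc 0) e p \<longleftrightarrow> p \<in> {[0], [1], [1, if e then 2 else 0]}"
  unfolding V2t_def by (simp add: in_bdry_S2 in_bdry_0 Ex_less_Suc2) (auto simp: numeral_2_eq_2)

lemma vcomp_typ:
  assumes "tm_of \<Gamma> x Star" "tm_of \<Gamma> y Star" "tm_of \<Gamma> a (Arr Star x y)" "tm_of \<Gamma> b (Arr Star x y)"
    "tm_of \<Gamma> c (Arr Star x y)" "tm_of \<Gamma> th (Arr (Arr Star x y) a b)" "tm_of \<Gamma> ph (Arr (Arr Star x y) b c)"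
  shows "tm_of \<Gamma> (vcomp x y a b c th ph) (Arr (Arr Star x y) a c)"
  unfolding vcomp_def
proof (rule coh_rule)
  show "tree_dim V2t \<le> Suc (tdim (Arr Star (V [0]) (V [1])))" by (simp add: V2t_def)
  show "tm_of (bctx V2t (tdim (Arr Star (V [0]) (V [1]))) False) (V [1, 0]) (Arr Star (V [0]) (V [1]))"
    by (auto simp: bctx_def bdry_V2t intro!: var_rule arr_rule star_rule)
  show "tm_of (bctx V2t (tdim (Arr Star (V [0]) (V [1]))) True) (V [1, 2]) (Arr Star (V [0]) (V [1]))"
    by (auto simp: bctx_def bdry_V2t intro!: var_rule arr_rule star_rule)
  show "fv_tm (V [1, 0]) \<union> fv_ty (Arr Star (V [0]) (V [1])) = bset V2t (tdim (Arr Star (V [0]) (V [1]))) False"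
    by (auto simp: bset_def bdry_V2t)
  show "fv_tm (V [1, 2]) \<union> fv_ty (Arr Star (V [0]) (V [1])) = bset V2t (tdim (Arr Star (V [0]) (V [1]))) True"
    by (auto simp: bset_def bdry_V2t)
qed (use assms in \<open>auto simp: is_pos_V2t\<close>)

definition W3t :: tree where "W3t = Br [Br [], Br [Br []], Br []]"

lemma is_pos_W3t: "is_pos W3t p \<longleftrightarrow> p \<in> {[0], [1], [2], [3], [1, 0], [2, 0], [2, 1], [2, 1, 0], [3, 0]}"
  unfolding W3t_def by (simp add: is_pos_Br2 Ex_less_Suc2 is_pos_nil) (auto simp: numeral_3_eq_3 numeral_2_eq_2)

lemma bdry_W3t: "in_bdry W3t (Suc 0) e p \<longleftrightarrow> p \<in> {[0], [1], [2], [3], [1, 0], [2, if e then 1 else 0], [3, 0]}"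
  unfolding W3t_def by (simp add: in_bdry_S2 in_bdry_0 Ex_less_Suc2) (auto simp: numeral_3_eq_3 numeral_2_eq_2)

definition whisk :: "tm \<Rightarrow> tm \<Rightarrow> tm \<Rightarrow> tm \<Rightarrow> tm \<Rightarrow> tm \<Rightarrow> tm \<Rightarrow> tm \<Rightarrow> tm \<Rightarrow> tm" where
  "whisk x0 x1 x2 x3 f a b g th = Coh W3t (Arr (Arr Star (V [0]) (V [3]))
      (c3 (V [0]) (V [1]) (V [2]) (V [3]) (V [1, 0]) (V [2, 0]) (V [3, 0]))
      (c3 (V [0]) (V [1]) (V [2]) (V [3]) (V [1, 0]) (V [2, 1]) (V [3, 0])))
    (\<lambda>q. if q = [0] then x0 else if q = [1] then x1 else if q = [2] then x2 else if q = [3] then x3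
      else if q = [1, 0] then f else if q = [2, 0] then a else if q = [2, 1] then b else if q = [3, 0] then g
      else if q = [2, 1, 0] then th else V [])"

lemma whisk_typ:
  assumes "tm_of \<Gamma> x0 Star" "tm_of \<Gamma> x1 Star" "tm_of \<Gamma> x2 Star" "tm_of \<Gamma> x3 Star"
    "tm_of \<Gamma> f (Arr Star x0 x1)" "tm_of \<Gamma> a (Arr Star x1 x2)" "tm_of \<Gamma> b (Arr Star x1 x2)"
    "tm_of \<Gamma> g (Arr Star x2 x3)" "tm_of \<Gamma> th (Arr (Arr Star x1 x2) a b)"
  shows "tm_of \<Gamma> (whisk x0 x1 x2 x3 f a b g th) (Arr (Arr Star x0 x3) (c3 x0 x1 x2 x3 f a g) (c3 x0 x1 x2 x3 f b g))"
  unfolding whisk_def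
proof (rule coh_rule)
  show "tree_dim W3t \<le> Suc (tdim (Arr Star (V [0]) (V [3])))" by (simp add: W3t_def)
  show "tm_of (bctx W3t (tdim (Arr Star (V [0]) (V [3]))) False)
     (c3 (V [0]) (V [1]) (V [2]) (V [3]) (V [1, 0]) (V [2, 0]) (V [3, 0])) (Arr Star (V [0]) (V [3]))"
    by (rule c3_typ) (auto simp: bctx_def bdry_W3t intro!: var_rule arr_rule star_rule)
  show "tm_of (bctx W3t (tdim (Arr Star (V [0]) (V [3]))) True)
     (c3 (V [0]) (V [1]) (V [2]) (V [3]) (V [1, 0]) (V [2, 1]) (V [3, 0])) (Arr Star (V [0]) (V [3]))"
    by (rule c3_typ) (auto simp: bctx_def bdry_W3t intro!: var_rule arr_rule star_rule)
  show "fv_tm (c3 (V [0]) (V [1]) (V [2]) (V [3]) (V [1, 0]) (V [2, 0]) (V [3, 0])) \<union> fv_ty (Arr Star (V [0]) (V [3])) = bset W3t (tdim (Arr Star (V [0]) (V [3]))) False"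
    by (auto simp: bset_def bdry_W3t fv_c3)
  show "fv_tm (c3 (V [0]) (V [1]) (V [2]) (V [3]) (V [1, 0]) (V [2, 1]) (V [3, 0])) \<union> fv_ty (Arr Star (V [0]) (V [3])) = bset W3t (tdim (Arr Star (V [0]) (V [3]))) True"
    by (auto simp: bset_def bdry_W3t fv_c3)
qed (use assms in \<open>auto simp: is_pos_W3t subst_c3\<close>)

definition unitc :: "tm \<Rightarrow> tm \<Rightarrow> tm \<Rightarrow> tm \<Rightarrow> tm \<Rightarrow> tm" where
  "unitc x y z f g = Coh (chain 2) (Arr (Arr Star (V [0]) (V [2]))
      (c3 (V [0]) (V [1]) (V [1]) (V [2]) (V [1, 0]) (idc (V [1])) (V [2, 0]))
      (comp0 (V [0]) (V [1]) (V [2]) (V [1, 0]) (V [2, 0])))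
    (\<lambda>q. if q = [0] then x else if q = [1] then y else if q = [2] then z
      else if q = [1, 0] then f else if q = [2, 0] then g else V [])"

lemma unitc_typ:
  assumes "tm_of \<Gamma> x Star" "tm_of \<Gamma> y Star" "tm_of \<Gamma> z Star"
    "tm_of \<Gamma> f (Arr Star x y)" "tm_of \<Gamma> g (Arr Star y z)"
  shows "tm_of \<Gamma> (unitc x y z f g) (Arr (Arr Star x z) (c3 x y y z f (idc y) g) (comp0 x y z f g))"
  unfolding unitc_def
proof (rule coh_rule)
  show "tree_dim (chain 2) \<le> Suc (tdim (Arr Star (V [0]) (V [2])))" using tree_dim_chain[of 2] by simp
  show "tm_of (bctx (chain 2) (tdim (Arr Star (V [0]) (V [2]))) False)
     (c3 (V [0]) (V [1]) (V [1]) (V [2]) (V [1, 0]) (idc (V [1])) (V [2, 0])) (Arr Star (V [0]) (V [2]))"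
    by (rule c3_typ) (auto simp: bctx_def in_bdry_chain1 is_pos_chain intro!: var_rule arr_rule star_rule idc_typ)
  show "tm_of (bctx (chain 2) (tdim (Arr Star (V [0]) (V [2]))) True)
     (comp0 (V [0]) (V [1]) (V [2]) (V [1, 0]) (V [2, 0])) (Arr Star (V [0]) (V [2]))"
    by (rule comp0_typ) (auto simp: bctx_def in_bdry_chain1 is_pos_chain intro!: var_rule arr_rule star_rule)
  show "fv_tm (c3 (V [0]) (V [1]) (V [1]) (V [2]) (V [1, 0]) (idc (V [1])) (V [2, 0])) \<union> fv_ty (Arr Star (V [0]) (V [2])) = bset (chain 2) (tdim (Arr Star (V [0]) (V [2]))) False"
    by (auto simp: bset_def in_bdry_chain1 is_pos_chain fv_c3 fv_idc one_le_two)
  show "fv_tm (comp0 (V [0]) (V [1]) (V [2]) (V [1, 0]) (V [2, 0])) \<union> fv_ty (Arr Star (V [0]) (V [2])) = bset (chain 2) (tdim (Arr Star (V [0]) (V [2]))) True"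
    by (auto simp: bset_def in_bdry_chain1 is_pos_chain fv_comp0 one_le_two)
qed (use assms in \<open>auto simp: is_pos_chain one_le_two subst_c3 subst_comp0 subst_idc\<close>)

lemma t1: "is_pos W3t [2,1,0]" by (simp add: is_pos_W3t)

abbreviation X :: "nat \<Rightarrow> tm" where "X j \<equiv> V (xg j)"
abbreviation FF :: "nat \<Rightarrow> tm" where "FF i \<equiv> V (fg i)"
abbreviation GG :: "nat \<Rightarrow> tm" where "GG i \<equiv> V (gg i)"

lemma X_typ: "j \<le> k \<Longrightarrow> tm_of (tel_ctx k) (X j) Star"
  by (rule var_rule) (auto simp: tel_ctx_def xg_def intro: star_rule)

lemma F_typ: "1 \<le> i \<Longrightarrow> i \<le> k \<Longrightarrow> tm_of (tel_ctx k) (FF i) (Arr Star (X (i - 1)) (X i))"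
  by (rule var_rule) (auto simp: tel_ctx_def fg_def intro!: star_rule arr_rule X_typ)

lemma G_typ: "1 \<le> i \<Longrightarrow> i \<le> k \<Longrightarrow> tm_of (tel_ctx k) (GG i) (Arr Star (X i) (X (i - 1)))"
  by (rule var_rule) (auto simp: tel_ctx_def gg_def intro!: star_rule arr_rule X_typ)

lemma A_typ: "1 \<le> i \<Longrightarrow> i \<le> k \<Longrightarrow> tm_of (tel_ctx k) (V (ag i))
   (Arr (Arr Star (X (i - 1)) (X (i - 1))) (comp0 (X (i - 1)) (X i) (X (i - 1)) (FF i) (GG i)) (idc (X (i - 1))))"
  using F_typ[of i k] G_typ[of i k]
  by (intro var_rule) (auto simp: tel_ctx_def ag_def intro!: star_rule arr_rule X_typ idc_typ comp0_typ)

fun Nn :: "nat \<Rightarrow> nat \<Rightarrow> tm" where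
  "Nn k 0 = comp0 (X (k - 1)) (X k) (X (k - 1)) (FF k) (GG k)"
| "Nn k (Suc d) = c3 (X (k - Suc d - 1)) (X (k - Suc d)) (X (k - Suc d)) (X (k - Suc d - 1))
      (FF (k - Suc d)) (Nn k d) (GG (k - Suc d))"

fun Tn :: "nat \<Rightarrow> nat \<Rightarrow> tm" where
  "Tn k 0 = V (ag k)"
| "Tn k (Suc d) = (let m = k - Suc d in
     vcomp (X (m - 1)) (X (m - 1)) (Nn k (Suc d))
       (c3 (X (m - 1)) (X m) (X m) (X (m - 1)) (FF m) (idc (X m)) (GG m)) (idc (X (m - 1)))
       (whisk (X (m - 1)) (X m) (X m) (X (m - 1)) (FF m) (Nn k d) (idc (X m)) (GG m) (Tn k d))
       (vcomp (X (m - 1)) (X (m - 1)) (c3 (X (m - 1)) (X m) (X m) (X (m - 1)) (FF m) (idc (X m)) (GG m))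
          (comp0 (X (m - 1)) (X m) (X (m - 1)) (FF m) (GG m)) (idc (X (m - 1)))
          (unitc (X (m - 1)) (X m) (X (m - 1)) (FF m) (GG m)) (V (ag m))))"

lemma NT_typ: "d < k \<Longrightarrow> tm_of (tel_ctx k) (Nn k d) (Arr Star (X (k - d - 1)) (X (k - d - 1))) \<and>
   tm_of (tel_ctx k) (Tn k d) (Arr (Arr Star (X (k - d - 1)) (X (k - d - 1))) (Nn k d) (idc (X (k - d - 1))))"
proof (induction d)
  case 0
  then show ?case
    using A_typ[of k k] F_typ[of k k] G_typ[of k k] by (auto intro!: comp0_typ X_typ)
next
  case (Suc d)
  define m where "m = k - Suc d"
  have m: "1 \<le> m" "m < k" "k - d - 1 = m" "k - Suc d - 1 = m - 1" using Suc.prems by (auto simp: m_def)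
  have IH: "tm_of (tel_ctx k) (Nn k d) (Arr Star (X m) (X m))"
     "tm_of (tel_ctx k) (Tn k d) (Arr (Arr Star (X m) (X m)) (Nn k d) (idc (X m)))"
    using Suc m by auto
  have x: "tm_of (tel_ctx k) (X (m - 1)) Star" "tm_of (tel_ctx k) (X m) Star" using m by (auto intro: X_typ)
  have f: "tm_of (tel_ctx k) (FF m) (Arr Star (X (m - 1)) (X m))" "tm_of (tel_ctx k) (GG m) (Arr Star (X m) (X (m - 1)))"
    using m F_typ[of m k] G_typ[of m k] by auto
  have N: "tm_of (tel_ctx k) (Nn k (Suc d)) (Arr Star (X (m - 1)) (X (m - 1)))"
    unfolding Nn.simps m_def[symmetric] m by (rule c3_typ) (use x f IH in auto)
  have M: "tm_of (tel_ctx k) (c3 (X (m - 1)) (X m) (X m) (X (m - 1)) (FF m) (idc (X m)) (GG m)) (Arr Star (X (m - 1)) (X (m - 1)))"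
    by (rule c3_typ) (use x f in \<open>auto intro: idc_typ\<close>)
  have C: "tm_of (tel_ctx k) (comp0 (X (m - 1)) (X m) (X (m - 1)) (FF m) (GG m)) (Arr Star (X (m - 1)) (X (m - 1)))"
    by (rule comp0_typ) (use x f in auto)
  have W: "tm_of (tel_ctx k) (whisk (X (m - 1)) (X m) (X m) (X (m - 1)) (FF m) (Nn k d) (idc (X m)) (GG m) (Tn k d))
     (Arr (Arr Star (X (m - 1)) (X (m - 1))) (Nn k (Suc d)) (c3 (X (m - 1)) (X m) (X m) (X (m - 1)) (FF m) (idc (X m)) (GG m)))"
    unfolding Nn.simps m_def[symmetric] m by (rule whisk_typ) (use x f IH in \<open>auto intro: idc_typ\<close>)
  have U: "tm_of (tel_ctx k) (unitc (X (m - 1)) (X m) (X (m - 1)) (FF m) (GG m))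
     (Arr (Arr Star (X (m - 1)) (X (m - 1))) (c3 (X (m - 1)) (X m) (X m) (X (m - 1)) (FF m) (idc (X m)) (GG m))
       (comp0 (X (m - 1)) (X m) (X (m - 1)) (FF m) (GG m)))"
    by (rule unitc_typ) (use x f in auto)
  have Al: "tm_of (tel_ctx k) (V (ag m)) (Arr (Arr Star (X (m - 1)) (X (m - 1)))
     (comp0 (X (m - 1)) (X m) (X (m - 1)) (FF m) (GG m)) (idc (X (m - 1))))"
    using A_typ[of m k] m by auto
  have T: "tm_of (tel_ctx k) (Tn k (Suc d)) (Arr (Arr Star (X (m - 1)) (X (m - 1))) (Nn k (Suc d)) (idc (X (m - 1))))"
    unfolding Tn.simps Let_def m_def[symmetric]
    by (intro vcomp_typ x N M C W U Al idc_typ)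
  have e: "k - Suc d - 1 = m - 1" using m_def by simp
  show ?case unfolding e using N T by blast
qed


definition obk :: "nat \<Rightarrow> nat \<Rightarrow> tm" where
  "obk k = (\<lambda>j. if j \<le> k then V (xg j) else V (xg (2 * k - j)))"
definition ark :: "nat \<Rightarrow> nat \<Rightarrow> tm" where
  "ark k = (\<lambda>i. if i \<le> k then V (fg i) else V (gg (2 * k - i + 1)))"

lemma ob_typ: "j \<le> 2 * k \<Longrightarrow> tm_of (tel_ctx k) (obk k j) Star"
  unfolding obk_def by (auto intro: X_typ)

lemma ar_typ: "1 \<le> i \<Longrightarrow> i \<le> 2 * k \<Longrightarrow> tm_of (tel_ctx k) (ark k i) (Arr Star (obk k (i - 1)) (obk k i))"
proof -
  assume i: "1 \<le> i" "i \<le> 2 * k"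
  consider "i \<le> k" | "i = k + 1" | "k + 1 < i" by linarith
  then show ?thesis
  proof cases
    case 1
    then have "i - 1 \<le> k" by simp
    then show ?thesis using F_typ[of i k] i 1 by (simp add: obk_def ark_def)
  next
    case 2 then show ?thesis using G_typ[of k k] i by (simp add: obk_def ark_def)
  next
    case 3
    define l where "l = 2 * k - i + 1"
    have l: "1 \<le> l" "l \<le> k" "2 * k - (i - 1) = l" "2 * k - i = l - 1" "\<not> i - 1 \<le> k" "\<not> i \<le> k" using 3 i by (auto simp: l_def)
    show ?thesis using G_typ[of l k] l 3 by (simp add: obk_def ark_def l_def[symmetric])
  qed
qed

definition sigF :: "nat \<Rightarrow> nat list \<Rightarrow> tm" where
  "sigF k = (\<lambda>q. case q of [j] \<Rightarrow> obk k j | [i, 0] \<Rightarrow> ark k i | _ \<Rightarrow> V [])"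

fun Pn :: "nat \<Rightarrow> nat \<Rightarrow> tm" where
  "Pn k 0 = comp0 (V [k - 1]) (V [k]) (V [k + 1]) (V [k, 0]) (V [k + 1, 0])"
| "Pn k (Suc d) = c3 (V [k - Suc d - 1]) (V [k - Suc d]) (V [2 * k - (k - Suc d)]) (V [2 * k - (k - Suc d) + 1])
     (V [k - Suc d, 0]) (Pn k d) (V [2 * k - (k - Suc d) + 1, 0])"

lemma sigF_nil: "sigF k [] = V []" by (simp add: sigF_def)

lemma P_subst: "d < k \<Longrightarrow> subst_tm (sigF k) (Pn k d) = Nn k d"
proof (induction d)
  case 0
  then show ?case by (simp add: subst_comp0 sigF_nil) (simp add: sigF_def obk_def ark_def)
next
  case (Suc d)
  then have "subst_tm (sigF k) (Pn k d) = Nn k d" by simp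
  moreover have "2 * k - (2 * k - (k - Suc d)) = k - Suc d" "2 * k - (2 * k - (k - Suc d) + 1) = k - Suc d - 1"
    "\<not> 2 * k - (k - Suc d) \<le> k" "\<not> 2 * k - (k - Suc d) + 1 \<le> k"
    "2 * k - (2 * k - (k - Suc d) + 1) + 1 = k - Suc d"
    using Suc.prems by auto
  ultimately show ?case using Suc.prems
    by (simp add: subst_c3 sigF_nil) (simp add: sigF_def obk_def ark_def)
qed

lemma v0: "j \<le> N \<Longrightarrow> tm_of (bctx (chain N) (Suc 0) e) (V [j]) Star"
  by (rule var_rule) (auto simp: bctx_def in_bdry_chain1 is_pos_chain intro: star_rule)

lemma v1: assumes "1 \<le> i" "i \<le> N" shows "tm_of (bctx (chain N) (Suc 0) e) (V [i, 0]) (Arr Star (V [i - 1]) (V [i]))"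
proof (rule var_rule)
  show "ty_ok (bctx (chain N) (Suc 0) e) (Arr Star (V [i - 1]) (V [i]))"
    by (intro arr_rule star_rule v0) (use assms in auto)
qed (use assms in \<open>auto simp: bctx_def in_bdry_chain1 is_pos_chain\<close>)

lemma P_typ: "d < k \<Longrightarrow> tm_of (bctx (chain (2 * k)) (Suc 0) e) (Pn k d) (Arr Star (V [k - d - 1]) (V [2 * k - (k - d) + 1]))"
proof (induction d)
  case 0
  have "tm_of (bctx (chain (2 * k)) (Suc 0) e) (Pn k 0) (Arr Star (V [k - 1]) (V [k + 1]))"
    unfolding Pn.simps
  proof (rule comp0_typ)
    show "tm_of (bctx (chain (2 * k)) (Suc 0) e) (V [k, 0]) (Arr Star (V [k - 1]) (V [k]))"
      using v1[of k "2 * k" e] 0 by simp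
    show "tm_of (bctx (chain (2 * k)) (Suc 0) e) (V [k + 1, 0]) (Arr Star (V [k]) (V [k + 1]))"
      using v1[of "k + 1" "2 * k" e] 0 by simp
  qed (use 0 in \<open>simp_all add: v0\<close>)
  moreover have "2 * k - k + 1 = k + 1" by simp
  ultimately show ?case by simp
next
  case (Suc d)
  define m where "m = k - Suc d"
  have m: "1 \<le> m" "k - d - 1 = m" "2 * k - (k - d) + 1 = 2 * k - m" "2 * k - m \<le> 2 * k"
     "2 * k - m + 1 \<le> 2 * k" "k - Suc d - 1 = m - 1" "2 * k - (k - Suc d) = 2 * k - m"
    using Suc.prems by (auto simp: m_def)
  have IH: "tm_of (bctx (chain (2 * k)) (Suc 0) e) (Pn k d) (Arr Star (V [m]) (V [2 * k - m]))"
    using Suc m by simp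
  have "tm_of (bctx (chain (2 * k)) (Suc 0) e) (Pn k (Suc d)) (Arr Star (V [m - 1]) (V [2 * k - m + 1]))"
    unfolding Pn.simps m_def[symmetric] m
  proof (rule c3_typ)
    show "tm_of (bctx (chain (2 * k)) (Suc 0) e) (V [m, 0]) (Arr Star (V [m - 1]) (V [m]))"
      using v1[of m "2 * k" e] m by simp
    show "tm_of (bctx (chain (2 * k)) (Suc 0) e) (V [2 * k - m + 1, 0]) (Arr Star (V [2 * k - m]) (V [2 * k - m + 1]))"
      using v1[of "2 * k - m + 1" "2 * k" e] m by simp
  qed (use IH m in \<open>simp_all add: v0\<close>)
  moreover have "k - Suc d = m" by (simp add: m_def)
  ultimately show ?case by simp
qed

lemma P_fv: "d < k \<Longrightarrow> fv_tm (Pn k d) = {q. \<exists>j. q = [j] \<and> k - d - 1 \<le> j \<and> j \<le> 2 * k - (k - d) + 1} \<union>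
   {q. \<exists>i. q = [i, 0] \<and> k - d \<le> i \<and> i \<le> 2 * k - (k - d) + 1}"
proof (induction d)
  case 0
  have e: "2 * k - (k - 0) + 1 = k + 1" by simp
  show ?case unfolding e Pn.simps fv_comp0
  proof (intro set_eqI iffI)
    fix q assume "q \<in> {q. \<exists>j. q = [j] \<and> k - 0 - 1 \<le> j \<and> j \<le> k + 1} \<union> {q. \<exists>i. q = [i, 0] \<and> k - 0 \<le> i \<and> i \<le> k + 1}"
    then obtain j where "q = [j] \<and> k - 1 \<le> j \<and> j \<le> k + 1 \<or> q = [j, 0] \<and> k \<le> j \<and> j \<le> k + 1" by auto
    moreover have "k - 1 \<le> j \<Longrightarrow> j \<le> k + 1 \<Longrightarrow> j = k - 1 \<or> j = k \<or> j = k + 1" using 0 by linarith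
    moreover have "k \<le> j \<Longrightarrow> j \<le> k + 1 \<Longrightarrow> j = k \<or> j = k + 1" by linarith
    ultimately show "q \<in> fv_tm (V [k - 1]) \<union> fv_tm (V [k]) \<union> fv_tm (V [k + 1]) \<union> fv_tm (V [k, 0]) \<union> fv_tm (V [k + 1, 0])"
      by auto
  qed auto
next
  case (Suc d)
  define m where "m = k - Suc d"
  have m: "1 \<le> m" "k - d - 1 = m" "2 * k - (k - d) + 1 = 2 * k - m" "k - d = m + 1"
     "k - Suc d - 1 = m - 1" "2 * k - (k - Suc d) = 2 * k - m" "k - Suc d = m" "m < 2 * k - m"
    using Suc.prems by (auto simp: m_def)
  have IH: "fv_tm (Pn k d) = {q. \<exists>j. q = [j] \<and> m \<le> j \<and> j \<le> 2 * k - m} \<union>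
   {q. \<exists>i. q = [i, 0] \<and> m + 1 \<le> i \<and> i \<le> 2 * k - m}"
    using Suc m by simp
  show ?case unfolding Pn.simps fv_c3 IH m(5) m(6) m(7)
  proof (intro set_eqI iffI)
    fix q assume "q \<in> {q. \<exists>j. q = [j] \<and> m - 1 \<le> j \<and> j \<le> 2 * k - m + 1} \<union> {q. \<exists>i. q = [i, 0] \<and> m \<le> i \<and> i \<le> 2 * k - m + 1}"
    then obtain j where "q = [j] \<and> m - 1 \<le> j \<and> j \<le> 2 * k - m + 1 \<or> q = [j, 0] \<and> m \<le> j \<and> j \<le> 2 * k - m + 1" by auto
    moreover have "m - 1 \<le> j \<Longrightarrow> j \<le> 2 * k - m + 1 \<Longrightarrow> j = m - 1 \<or> j = 2 * k - m + 1 \<or> (m \<le> j \<and> j \<le> 2 * k - m)" by linarith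
    moreover have "m \<le> j \<Longrightarrow> j \<le> 2 * k - m + 1 \<Longrightarrow> j = m \<or> j = 2 * k - m + 1 \<or> (m + 1 \<le> j \<and> j \<le> 2 * k - m)" by linarith
    ultimately show "q \<in> fv_tm (V [m - 1]) \<union> fv_tm (V [m]) \<union> fv_tm (V [2 * k - m]) \<union> fv_tm (V [2 * k - m + 1]) \<union> fv_tm (V [m, 0]) \<union>
       ({q. \<exists>j. q = [j] \<and> m \<le> j \<and> j \<le> 2 * k - m} \<union> {q. \<exists>i. q = [i, 0] \<and> m + 1 \<le> i \<and> i \<le> 2 * k - m}) \<union>
       fv_tm (V [2 * k - m + 1, 0])"
      by auto
  qed (use m(8) in auto)
qed


definition Sk :: "nat \<Rightarrow> tm" where
  "Sk k = ucomp (2 * k) (\<lambda>j. V [j]) (\<lambda>i. V [i, 0])"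

lemma ob0: "0 < k \<Longrightarrow> obk k 0 = X 0" and ob2k: "0 < k \<Longrightarrow> obk k (2 * k) = X 0"
  by (auto simp: obk_def)

lemma Fc_typ:
  assumes k: "0 < k"
  shows "tm_of (tel_ctx k) (Coh (chain (2 * k)) (Arr (Arr Star (V [0]) (V [2 * k])) (Sk k) (Pn k (k - 1))) (sigF k))
     (Arr (Arr Star (X 0) (X 0)) (ucomp (2 * k) (obk k) (ark k)) (Nn k (k - 1)))"
proof (rule coh_rule)
  show "tree_dim (chain (2 * k)) \<le> Suc (tdim (Arr Star (V [0]) (V [2 * k])))" using tree_dim_chain[of "2 * k"] by simp
  show "tm_of (bctx (chain (2 * k)) (tdim (Arr Star (V [0]) (V [2 * k]))) False) (Sk k) (Arr Star (V [0]) (V [2 * k]))"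
  proof -
    have "tm_of (bctx (chain (2 * k)) (Suc 0) False) (ucomp (2 * k) (\<lambda>j. V [j]) (\<lambda>i. V [i, 0]))
       (Arr Star ((\<lambda>j. V [j]) 0) ((\<lambda>j. V [j]) (2 * k)))"
      by (rule ucomp_typ) (auto intro: v0 v1[simplified])
    then show ?thesis by (simp add: Sk_def)
  qed
  have PS: "{p. is_pos (chain (2 * k)) p} = {q. \<exists>j. q = [j] \<and> 0 \<le> j \<and> j \<le> 2 * k} \<union> {q. \<exists>i. q = [i, 0] \<and> 1 \<le> i \<and> i \<le> 2 * k}"
    by (auto simp: is_pos_chain)
  show "fv_tm (Sk k) \<union> fv_ty (Arr Star (V [0]) (V [2 * k])) = bset (chain (2 * k)) (tdim (Arr Star (V [0]) (V [2 * k]))) False"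
    by (auto simp: Sk_def fv_ucomp bset_def in_bdry_chain1 is_pos_chain)
  have P: "tm_of (bctx (chain (2 * k)) (Suc 0) True) (Pn k (k - 1)) (Arr Star (V [k - (k - 1) - 1]) (V [2 * k - (k - (k - 1)) + 1]))"
    by (rule P_typ) (use k in simp)
  moreover have "k - (k - 1) - 1 = 0" "2 * k - (k - (k - 1)) + 1 = 2 * k" using k by auto
  ultimately show "tm_of (bctx (chain (2 * k)) (tdim (Arr Star (V [0]) (V [2 * k]))) True) (Pn k (k - 1)) (Arr Star (V [0]) (V [2 * k]))"
    by simp
  have Pf: "fv_tm (Pn k (k - 1)) = {q. \<exists>j. q = [j] \<and> k - (k - 1) - 1 \<le> j \<and> j \<le> 2 * k - (k - (k - 1)) + 1} \<union>
   {q. \<exists>i. q = [i, 0] \<and> k - (k - 1) \<le> i \<and> i \<le> 2 * k - (k - (k - 1)) + 1}"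
    by (rule P_fv) (use k in simp)
  moreover have "k - (k - 1) = 1" using k by auto
  ultimately have Pf': "fv_tm (Pn k (k - 1)) = {p. is_pos (chain (2 * k)) p}"
    unfolding PS using \<open>2 * k - (k - (k - 1)) + 1 = 2 * k\<close> by simp
  show "fv_tm (Pn k (k - 1)) \<union> fv_ty (Arr Star (V [0]) (V [2 * k])) = bset (chain (2 * k)) (tdim (Arr Star (V [0]) (V [2 * k]))) True"
    unfolding Pf' by (auto simp: bset_def in_bdry_chain1 is_pos_chain)
  fix p assume "is_pos (chain (2 * k)) p"
  then show "tm_of (tel_ctx k) (sigF k p) (subst_ty (sigF k) (ptype p))"
    by (auto simp: is_pos_chain sigF_def intro: ob_typ ar_typ[simplified])
next
  have "subst_tm (sigF k) (Sk k) = ucomp (2 * k) (obk k) (ark k)"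
    unfolding Sk_def by (subst subst_ucomp) (simp_all add: sigF_def)
  then show "Arr (Arr Star (X 0) (X 0)) (ucomp (2 * k) (obk k) (ark k)) (Nn k (k - 1)) =
    subst_ty (sigF k) (Arr (Arr Star (V [0]) (V [2 * k])) (Sk k) (Pn k (k - 1)))"
    using P_subst[of "k - 1" k] k by (simp add: sigF_def ob0 ob2k)
qed

lemma main_typ:
  assumes k: "0 < k"
  shows "\<exists>tel. tm_of (tel_ctx k) tel (Arr (Arr Star (X 0) (X 0)) (ucomp (2 * k) (obk k) (ark k)) (idc (X 0)))"
proof -
  have x: "tm_of (tel_ctx k) (X 0) Star" by (rule X_typ) simp
  have u0: "tm_of (tel_ctx k) (ucomp (2 * k) (obk k) (ark k)) (Arr Star (obk k 0) (obk k (2 * k)))"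
    by (rule ucomp_typ) (auto intro: ob_typ ar_typ[simplified])
  have u: "tm_of (tel_ctx k) (ucomp (2 * k) (obk k) (ark k)) (Arr Star (X 0) (X 0))"
    using u0 k by (simp add: ob0 ob2k)
  have NT: "tm_of (tel_ctx k) (Nn k (k - 1)) (Arr Star (X (k - (k - 1) - 1)) (X (k - (k - 1) - 1))) \<and>
   tm_of (tel_ctx k) (Tn k (k - 1)) (Arr (Arr Star (X (k - (k - 1) - 1)) (X (k - (k - 1) - 1))) (Nn k (k - 1)) (idc (X (k - (k - 1) - 1))))"
    by (rule NT_typ) (use k in simp)
  moreover have "k - (k - 1) - 1 = 0" using k by simp
  ultimately have N: "tm_of (tel_ctx k) (Nn k (k - 1)) (Arr Star (X 0) (X 0))"
    and T: "tm_of (tel_ctx k) (Tn k (k - 1)) (Arr (Arr Star (X 0) (X 0)) (Nn k (k - 1)) (idc (X 0)))"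
    by simp_all
  show ?thesis
    by (rule exI, rule vcomp_typ[OF x x u N idc_typ[OF x] Fc_typ[OF k] T])
qed

theorem theorem5p2:
  fixes k :: nat
  assumes "0 < k"
  shows "\<exists>tel. tm_of (tel_ctx k) tel
           (Arr (Arr Star (V (xg 0)) (V (xg 0)))
              (ucomp (2 * k)
                 (\<lambda>j. if j \<le> k then V (xg j) else V (xg (2 * k - j)))
                 (\<lambda>i. if i \<le> k then V (fg i) else V (gg (2 * k - i + 1))))
              (idc (V (xg 0))))"
  using main_typ[OF assms] unfolding obk_def ark_def .

end
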